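(* Consider the complex polynomial optimization problem $\inf\{f : g_j\ge0,\ j\in[m]\}$ and assume it is a quadratically constrained quadratic program, i.e. $\deg f\le2$ and $1\le\deg g_j\le2$ for all $j\in[m]$. Then the term-sparsity relaxation with $d=1$, $k=1$ and the dense first-order relaxation have the same optimal value: $\rho^{\mathrm{ts}}_{1,1}=\rho_1$.
   Context: Notation: $[n]=\{1,\dots,n\}$; $\mathbb N^n_t=\{\alpha\in\mathbb N^n:\sum_i\alpha_i\le t\}$. Let $\mathbf z=(z_1,\dots,z_n)$ be complex variables and $\bar{\mathbf z}$ their conjugates. A polynomial $p\in\mathbb C[\mathbf z,\bar{\mathbf z}]$ is written $p=\sum_{(\beta,\gamma)}p_{\beta,\gamma}\mathbf z^\beta\bar{\mathbf z}^\gamma$; its support is $\mathrm{supp}(p)=\{(\beta,\gamma)\in\mathbb N^n\times\mathbb N^n:p_{\beta,\gamma}\neq0\}$ and $\deg p=\max\{|\beta|+|\gamma|:(\beta,\gamma)\in\mathrm{supp}(p)\}$. $p$ is Hermitian if $p_{\beta,\gamma}=\overline{p_{\gamma,\beta}}$. For $(\beta,\gamma)\in\mathbb N^n\times\mathbb N^n$ and $\mathscr B\subseteq\mathbb N^n\times\mathbb N^n$, $(\beta,\gamma)+\mathscr B=\{(\beta+\beta',\gamma+\gamma'):(\beta',\gamma')\in\mathscr B\}$. The problem has Hermitian $f,g_1,\dots,g_m$; $d_j=\lceil\deg g_j/2\rceil$, $d_0=0$, $g_0=1$, $d_{\min}=\max\{\lceil\deg f/2\rceil,d_1,\dots,d_m\}$,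 and $\mathscr A=\mathrm{supp}(f)\cup\bigcup_{j=1}^m\mathrm{supp}(g_j)$. Moments: $\mathbf y=(y_{\beta,\gamma})$ complex with $y_{\beta,\gamma}=\overline{y_{\gamma,\beta}}$; $L_{\mathbf y}(p)=\sum p_{\beta,\gamma}y_{\beta,\gamma}$; for Hermitian $g$, $\mathbf M_t(g\mathbf y)$ is the Hermitian matrix indexed by $\mathbb N^n_t$ with $(\beta,\gamma)$ entry $\sum_{(\beta',\gamma')}g_{\beta',\gamma'}y_{\beta+\beta',\gamma+\gamma'}$, and $\mathbf M_t(\mathbf y)=\mathbf M_t(1\cdot\mathbf y)$. Dense relaxation $(Q_d)$, $d\ge d_{\min}$: minimize $L_{\mathbf y}(f)$ s.t. $\mathbf M_d(\mathbf y)\succeq0$, $\mathbf M_{d-d_j}(g_j\mathbf y)\succeq0$ ($j\in[m]$), $y_{\mathbf 0,\mathbf 0}=1$; optimal value $\rho_d$. Graphs and matrices: graphs are undirected and simple; for a graph $G$ on an ordered node set $V$ with $|V|=r$, $B_G$ is its adjacency matrix with ones on the diagonal, $\circ$ is the entrywise product, $\mathbf H^r_+$ is the cone of $r\times r$ Hermitian PSD matrices indexed by $V$, $\Pi_G(Q)$ keeps the entries $(\beta,\gamma)$ of $Q$ with $\beta=\gamma$ or $\{\beta,\gamma\}\in E(G)$ and sets the others to $0$, and $\Pi_G(\mathbf H^r_+)=\{\Pi_G(Q):Q\in\mathbf H^r_+\}$. A chordal extension $\overline G$ of $G$ is a chordal graph on the same nodes containing $G$; a fixed rule $G\mapsto\overline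 G$ is used, satisfying $G\subseteq H\Rightarrow\overline G\subseteq\overline H$ (subgraph inclusion). Term sparsity: for a graph $G$ with nodes in $\mathbb N^n$ and Hermitian $g$, $\mathrm{supp}_g(G)=\{(\beta+\beta',\gamma+\gamma'):\ (\beta=\gamma\in V(G)\text{ or }\{\beta,\gamma\}\in E(G)),\ (\beta',\gamma')\in\mathrm{supp}(g)\}$. Fix $d\ge d_{\min}$. The tsp graph $G^{\mathrm{tsp}}_d$ has nodes $\mathbb N^n_d$ and edges $\{\beta,\gamma\}$, $\beta\ne\gamma$, with $(\beta,\gamma)\in\mathscr A$. Put $G^{(0)}_{d,0}=G^{\mathrm{tsp}}_d$ and, for $j\in[m]$, let $G^{(0)}_{d,j}$ be the graph on $\mathbb N^n_{d-d_j}$ without edges. For $k\ge1$ and $j\in\{0\}\cup[m]$, $F^{(k)}_{d,j}$ is the graph on $\mathbb N^n_{d-d_j}$ whose edges are the $\{\beta,\gamma\}$, $\beta\ne\gamma$, with $((\beta,\gamma)+\mathrm{supp}(g_j))\cap\bigcup_{i=0}^m\mathrm{supp}_{g_i}(G^{(k-1)}_{d,i})\neq\emptyset$, and $G^{(k)}_{d,j}=\overline{F^{(k)}_{d,j}}$. With $r_j=\binom{n+d-d_j}{d-d_j}$, the relaxation $(Q^{\mathrm{ts}}_{d,k})$ is: minimize $L_{\mathbf y}(f)$ s.t. $B_{G^{(k)}_{d,j}}\circ\mathbf M_{d-d_j}(g_j\mathbf y)\in\Pi_{G^{(k)}_{d,j}}(\mathbf H^{r_j}_+)$ for all $j\in\{0\}\cup[m]$,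 and $y_{\mathbf 0,\mathbf 0}=1$; optimal value $\rho^{\mathrm{ts}}_{d,k}$. *)

theory Defs
  imports Complex_Main "HOL-Library.Extended_Real"
begin

text \<open>Exponent vectors are functions nat => nat (only the first n coordinates are
used).  A polynomial p in C[z, conj z] is its coefficient function on pairs
(beta, gamma) of exponent vectors.\<close>

type_synonym expo = "nat \<Rightarrow> nat"
type_synonym cpoly = "expo \<times> expo \<Rightarrow> complex"

definition zexp :: expo where "zexp = (\<lambda>_. 0)"

definition eadd :: "expo \<Rightarrow> expo \<Rightarrow> expo" where
  "eadd a b = (\<lambda>i. a i + b i)"

definition elen :: "nat \<Rightarrow> expo \<Rightarrow> nat" where
  "elen n a = (\<Sum>i<n. a i)"

definition Nmon :: "nat \<Rightarrow> nat \<Rightarrow> expo set" where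
  "Nmon n t = {a. (\<forall>i\<ge>n. a i = 0) \<and> elen n a \<le> t}"

definition supp :: "cpoly \<Rightarrow> (expo \<times> expo) set" where
  "supp p = {bc. p bc \<noteq> 0}"

definition is_cpoly :: "nat \<Rightarrow> cpoly \<Rightarrow> bool" where
  "is_cpoly n p \<longleftrightarrow> finite (supp p) \<and>
     (\<forall>(b, c) \<in> supp p. \<forall>i\<ge>n. b i = 0 \<and> c i = 0)"

definition deg :: "nat \<Rightarrow> cpoly \<Rightarrow> nat" where
  "deg n p = (if supp p = {} then 0 else Max ((\<lambda>(b, c). elen n b + elen n c) ` supp p))"

definition hermitian :: "cpoly \<Rightarrow> bool" where
  "hermitian p \<longleftrightarrow> (\<forall>b c. p (b, c) = cnj (p (c, b)))"

definition one_poly :: cpoly where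
  "one_poly = (\<lambda>(b, c). if b = zexp \<and> c = zexp then 1 else 0)"

definition herm_moments :: "(expo \<times> expo \<Rightarrow> complex) \<Rightarrow> bool" where
  "herm_moments y \<longleftrightarrow> (\<forall>b c. y (b, c) = cnj (y (c, b)))"

definition Ly :: "(expo \<times> expo \<Rightarrow> complex) \<Rightarrow> cpoly \<Rightarrow> complex" where
  "Ly y p = (\<Sum>(b, c) \<in> supp p. p (b, c) * y (b, c))"

definition Mmat :: "nat \<Rightarrow> nat \<Rightarrow> cpoly \<Rightarrow> (expo \<times> expo \<Rightarrow> complex) \<Rightarrow> expo \<Rightarrow> expo \<Rightarrow> complex" where
  "Mmat n t g y = (\<lambda>b c. if b \<in> Nmon n t \<and> c \<in> Nmon n t
      then (\<Sum>(b', c') \<in> supp g. g (b', c') * y (eadd b b', eadd c c')) else 0)"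

definition psd :: "'a set \<Rightarrow> ('a \<Rightarrow> 'a \<Rightarrow> complex) \<Rightarrow> bool" where
  "psd V Q \<longleftrightarrow> (\<forall>i\<in>V. \<forall>j\<in>V. Q i j = cnj (Q j i)) \<and>
     (\<forall>v :: 'a \<Rightarrow> complex. 0 \<le> Re (\<Sum>i\<in>V. \<Sum>j\<in>V. cnj (v i) * Q i j * v j))"

type_synonym 'a graph = "'a set \<times> 'a set set"

definition is_graph :: "'a graph \<Rightarrow> bool" where
  "is_graph G \<longleftrightarrow> (\<forall>e \<in> snd G. \<exists>a b. a \<noteq> b \<and> e = {a, b} \<and> a \<in> fst G \<and> b \<in> fst G)"

definition subgraph :: "'a graph \<Rightarrow> 'a graph \<Rightarrow> bool" where
  "subgraph G H \<longleftrightarrow> fst G \<subseteq> fst H \<and> snd G \<subseteq> snd H"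

definition chordal :: "'a graph \<Rightarrow> bool" where
  "chordal G \<longleftrightarrow> (\<forall>cs. distinct cs \<and> length cs \<ge> 4 \<and> set cs \<subseteq> fst G \<and>
      (\<forall>i<length cs. {cs ! i, cs ! ((i + 1) mod length cs)} \<in> snd G) \<longrightarrow>
      (\<exists>i<length cs. \<exists>j<length cs. i \<noteq> j \<and> j \<noteq> (i + 1) mod length cs \<and>
          i \<noteq> (j + 1) mod length cs \<and> {cs ! i, cs ! j} \<in> snd G))"

definition chordal_ext_rule :: "('a graph \<Rightarrow> 'a graph) \<Rightarrow> bool" where
  "chordal_ext_rule ext \<longleftrightarrow>
     (\<forall>G. is_graph G \<longrightarrow> is_graph (ext G) \<and> chordal (ext G) \<and>
          fst (ext G) = fst G \<and> snd G \<subseteq> snd (ext G)) \<and>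
     (\<forall>G H. is_graph G \<and> is_graph H \<and> subgraph G H \<longrightarrow> subgraph (ext G) (ext H))"

definition Bcirc :: "'a graph \<Rightarrow> ('a \<Rightarrow> 'a \<Rightarrow> complex) \<Rightarrow> 'a \<Rightarrow> 'a \<Rightarrow> complex" where
  "Bcirc G M = (\<lambda>b c. (if b \<in> fst G \<and> c \<in> fst G \<and> (b = c \<or> {b, c} \<in> snd G) then 1 else 0) * M b c)"

definition PiG :: "'a graph \<Rightarrow> ('a \<Rightarrow> 'a \<Rightarrow> complex) \<Rightarrow> 'a \<Rightarrow> 'a \<Rightarrow> complex" where
  "PiG G Q = (\<lambda>b c. if b \<in> fst G \<and> c \<in> fst G \<and> (b = c \<or> {b, c} \<in> snd G) then Q b c else 0)"

definition PiG_psd :: "'a graph \<Rightarrow> ('a \<Rightarrow> 'a \<Rightarrow> complex) set" where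
  "PiG_psd G = {PiG G Q | Q. psd (fst G) Q}"

definition gg :: "(nat \<Rightarrow> cpoly) \<Rightarrow> nat \<Rightarrow> cpoly" where
  "gg g j = (if j = 0 then one_poly else g j)"

definition dj :: "nat \<Rightarrow> (nat \<Rightarrow> cpoly) \<Rightarrow> nat \<Rightarrow> nat" where
  "dj n g j = (if j = 0 then 0 else (deg n (g j) + 1) div 2)"

definition Aset :: "cpoly \<Rightarrow> (nat \<Rightarrow> cpoly) \<Rightarrow> nat \<Rightarrow> (expo \<times> expo) set" where
  "Aset f g m = supp f \<union> (\<Union>j\<in>{1..m}. supp (g j))"

definition rho_dense :: "nat \<Rightarrow> cpoly \<Rightarrow> (nat \<Rightarrow> cpoly) \<Rightarrow> nat \<Rightarrow> nat \<Rightarrow> ereal" where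
  "rho_dense n f g m d = Inf {ereal (Re (Ly y f)) | y.
      herm_moments y \<and> y (zexp, zexp) = 1 \<and>
      psd (Nmon n d) (Mmat n d one_poly y) \<and>
      (\<forall>j\<in>{1..m}. psd (Nmon n (d - dj n g j)) (Mmat n (d - dj n g j) (g j) y))}"

definition tsp_graph :: "nat \<Rightarrow> cpoly \<Rightarrow> (nat \<Rightarrow> cpoly) \<Rightarrow> nat \<Rightarrow> nat \<Rightarrow> expo graph" where
  "tsp_graph n f g m d = (Nmon n d,
     {{b, c} | b c. b \<in> Nmon n d \<and> c \<in> Nmon n d \<and> b \<noteq> c \<and> (b, c) \<in> Aset f g m})"

definition supp_g :: "cpoly \<Rightarrow> expo graph \<Rightarrow> (expo \<times> expo) set" where
  "supp_g g G = {(eadd b b', eadd c c') | b c b' c'.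
      ((b = c \<and> b \<in> fst G) \<or> {b, c} \<in> snd G) \<and> (b', c') \<in> supp g}"

definition Fgraph :: "nat \<Rightarrow> (nat \<Rightarrow> cpoly) \<Rightarrow> nat \<Rightarrow> nat \<Rightarrow> (nat \<Rightarrow> expo graph) \<Rightarrow> nat \<Rightarrow> expo graph" where
  "Fgraph n g m d Gprev j = (Nmon n (d - dj n g j),
     {{b, c} | b c. b \<in> Nmon n (d - dj n g j) \<and> c \<in> Nmon n (d - dj n g j) \<and> b \<noteq> c \<and>
        {(eadd b b', eadd c c') | b' c'. (b', c') \<in> supp (gg g j)}
          \<inter> (\<Union>i\<in>{0..m}. supp_g (gg g i) (Gprev i)) \<noteq> {}})"

fun TS :: "(expo graph \<Rightarrow> expo graph) \<Rightarrow> nat \<Rightarrow> cpoly \<Rightarrow> (nat \<Rightarrow> cpoly) \<Rightarrow> nat \<Rightarrow> nat \<Rightarrow> nat \<Rightarrow> nat \<Rightarrow> expo graph"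
  where
  "TS ext n f g m d 0 = (\<lambda>j.
     if j = 0 then tsp_graph n f g m d else (Nmon n (d - dj n g j), {}))"
| "TS ext n f g m d (Suc k) = (\<lambda>j. ext (Fgraph n g m d (TS ext n f g m d k) j))"

definition rho_ts :: "(expo graph \<Rightarrow> expo graph) \<Rightarrow> nat \<Rightarrow> cpoly \<Rightarrow> (nat \<Rightarrow> cpoly) \<Rightarrow> nat \<Rightarrow> nat \<Rightarrow> nat \<Rightarrow> ereal" where
  "rho_ts ext n f g m d k = Inf {ereal (Re (Ly y f)) | y.
      herm_moments y \<and> y (zexp, zexp) = 1 \<and>
      (\<forall>j\<in>{0..m}. Bcirc (TS ext n f g m d k j) (Mmat n (d - dj n g j) (gg g j) y)
                     \<in> PiG_psd (TS ext n f g m d k j))}"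

end

theory Submission
  imports Defs
begin

lemma eadd_z1[simp]: "eadd b zexp = b" and eadd_z2[simp]: "eadd zexp b = b"
  by (auto simp: eadd_def zexp_def)

lemma supp_one: "supp one_poly = {(zexp, zexp)}"
  by (auto simp: supp_def one_poly_def split: if_splits)

lemma zexp_Nmon[simp]: "zexp \<in> Nmon n t"
  by (simp add: Nmon_def elen_def zexp_def)

lemma Nmon0: "a \<in> Nmon n 0 \<Longrightarrow> a = zexp"
proof -
  assume a: "a \<in> Nmon n 0"
  show "a = zexp"
  proof
    fix i
    show "a i = zexp i"
    proof (cases "i \<ge> n")
      case True thus ?thesis using a by (simp add: Nmon_def zexp_def)
    next
      case False
      have "(\<Sum>i<n. a i) = 0" using a by (simp add: Nmon_def elen_def)
      hence "\<forall>k\<in>{..<n}. a k = 0" by simp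
      thus ?thesis using False by (simp add: zexp_def)
    qed
  qed
qed

lemma Mmat_one: "b \<in> Nmon n t \<Longrightarrow> c \<in> Nmon n t \<Longrightarrow> Mmat n t one_poly y b c = y (b, c)"
  by (simp add: Mmat_def supp_one, simp add: one_poly_def)

lemma Bcirc_PiG: "Bcirc G M = PiG G M"
  by (auto simp: Bcirc_def PiG_def fun_eq_iff)

lemma psd_cong: "(\<And>i j. i \<in> V \<Longrightarrow> j \<in> V \<Longrightarrow> Q i j = Q' i j) \<Longrightarrow> psd V Q = psd V Q'"
proof -
  assume h: "\<And>i j. i \<in> V \<Longrightarrow> j \<in> V \<Longrightarrow> Q i j = Q' i j"
  have "\<And>v. (\<Sum>i\<in>V. \<Sum>j\<in>V. cnj (v i) * Q i j * v j) = (\<Sum>i\<in>V. \<Sum>j\<in>V. cnj (v i) * Q' i j * v j)"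
    by (intro sum.cong refl) (simp add: h)
  thus ?thesis unfolding psd_def using h by auto
qed

lemma supp_g_mem: "{b,c} \<in> snd G \<Longrightarrow> (b',c') \<in> supp h \<Longrightarrow> (eadd b b', eadd c c') \<in> supp_g h G"
  unfolding supp_g_def by blast

lemma Fgraph_mem: "b \<in> Nmon n (d - dj n g j) \<Longrightarrow> c \<in> Nmon n (d - dj n g j) \<Longrightarrow> b \<noteq> c
  \<Longrightarrow> (b',c') \<in> supp (gg g j) \<Longrightarrow> (eadd b b', eadd c c') \<in> supp_g (gg g 0) (Gp 0)
  \<Longrightarrow> {b, c} \<in> snd (Fgraph n g m d Gp j)"
  unfolding Fgraph_def
  apply (simp only: snd_conv mem_Collect_eq)
  apply (rule exI[of _ b], rule exI[of _ c])
  apply (intro conjI refl, assumption+)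
proof -
  assume h: "(b', c') \<in> supp (gg g j)" "(eadd b b', eadd c c') \<in> supp_g (gg g 0) (Gp 0)"
  have "(eadd b b', eadd c c') \<in> {(eadd b b', eadd c c') |b' c'. (b', c') \<in> supp (gg g j)}"
    using h(1) by blast
  moreover have "(eadd b b', eadd c c') \<in> (\<Union>i\<in>{0..m}. supp_g (gg g i) (Gp i))"
    using h(2) by (intro UN_I[of 0]) auto
  ultimately show "{(eadd b b', eadd c c') |b' c'. (b', c') \<in> supp (gg g j)} \<inter>
    (\<Union>i\<in>{0..m}. supp_g (gg g i) (Gp i)) \<noteq> {}" by blast
qed

lemma graph_F: "is_graph (Fgraph n g m d Gp j)"
  unfolding is_graph_def Fgraph_def by auto

lemma TS_Suc:
  assumes "chordal_ext_rule ext"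
  shows "fst (TS ext n f g m d (Suc k) j) = Nmon n (d - dj n g j)"
    and "snd (Fgraph n g m d (TS ext n f g m d k) j) \<subseteq> snd (TS ext n f g m d (Suc k) j)"
  using assms graph_F[of n g m d "TS ext n f g m d k" j]
  unfolding chordal_ext_rule_def by (auto simp: Fgraph_def)

theorem mainTheorem4:
  fixes n m :: nat and f :: cpoly and g :: "nat \<Rightarrow> cpoly"
    and ext :: "expo graph \<Rightarrow> expo graph"
  assumes ext: "chordal_ext_rule ext"
    and f_poly: "is_cpoly n f" and f_herm: "hermitian f"
    and g_poly: "\<forall>j\<in>{1..m}. is_cpoly n (g j)"
    and g_herm: "\<forall>j\<in>{1..m}. hermitian (g j)"
    and f_deg: "deg n f \<le> 2"
    and g_deg: "\<forall>j\<in>{1..m}. 1 \<le> deg n (g j) \<and> deg n (g j) \<le> 2"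
  shows "rho_ts ext n f g m 1 1 = rho_dense n f g m 1"
proof -
  let ?G = "TS ext n f g m 1 1"
  define V where "V = Nmon n 1"
  have dj0: "dj n g 0 = 0" by (simp add: dj_def)
  have dj1: "\<And>j. j \<in> {1..m} \<Longrightarrow> dj n g j = 1"
  proof -
    fix j assume "j \<in> {1..m}"
    with g_deg have "1 \<le> deg n (g j)" "deg n (g j) \<le> 2" by auto
    moreover have "j \<noteq> 0" using \<open>j \<in> {1..m}\<close> by auto
    ultimately show "dj n g j = 1" unfolding dj_def by auto
  qed
  have fstG: "\<And>j. fst (?G j) = Nmon n (1 - dj n g j)"
    using TS_Suc(1)[OF ext, of n f g m 1 0] by simp
  have sndG: "\<And>j. snd (Fgraph n g m 1 (TS ext n f g m 1 0) j) \<subseteq> snd (?G j)"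
    using TS_Suc(2)[OF ext, of n g m 1 f 0] by simp
  define Pts where "Pts y \<longleftrightarrow> herm_moments y \<and> y (zexp, zexp) = 1 \<and>
      (\<forall>j\<in>{0..m}. Bcirc (?G j) (Mmat n (1 - dj n g j) (gg g j) y) \<in> PiG_psd (?G j))" for y
  define Pd where "Pd y \<longleftrightarrow> herm_moments y \<and> y (zexp, zexp) = 1 \<and>
      psd (Nmon n 1) (Mmat n 1 one_poly y) \<and>
      (\<forall>j\<in>{1..m}. psd (Nmon n (1 - dj n g j)) (Mmat n (1 - dj n g j) (g j) y))" for y
  have d2t: "Pts y" if "Pd y" for y
  proof -
    have "Bcirc (?G j) (Mmat n (1 - dj n g j) (gg g j) y) \<in> PiG_psd (?G j)" if j: "j \<in> {0..m}" for j
    proof -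
      have "psd (Nmon n (1 - dj n g j)) (Mmat n (1 - dj n g j) (gg g j) y)"
      proof (cases "j = 0")
        case True thus ?thesis using \<open>Pd y\<close> by (simp add: Pd_def dj0 gg_def)
      next
        case False hence "j \<in> {1..m}" using j by auto
        thus ?thesis using \<open>Pd y\<close> False by (simp add: Pd_def gg_def)
      qed
      thus ?thesis unfolding Bcirc_PiG PiG_psd_def using fstG[of j] by auto
    qed
    thus ?thesis using that by (simp add: Pts_def Pd_def)
  qed
  have t2d: "\<exists>y'. Pd y' \<and> Re (Ly y' f) = Re (Ly y f)" if "Pts y" for y
  proof -
    have "Bcirc (?G 0) (Mmat n 1 one_poly y) \<in> PiG_psd (?G 0)"
      using \<open>Pts y\<close> unfolding Pts_def by (metis atLeastAtMost_iff dj0 gg_def diff_zero zero_le)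
    then obtain Q where Qe: "Bcirc (?G 0) (Mmat n 1 one_poly y) = PiG (?G 0) Q"
      and Qpsd: "psd V Q"
      unfolding PiG_psd_def using fstG[of 0] by (auto simp: dj0 V_def)
    have fst0: "fst (?G 0) = V" using fstG[of 0] by (simp add: dj0 V_def)
    have Qy: "Q b c = y (b, c)" if "b \<in> V" "c \<in> V" "b = c \<or> {b, c} \<in> snd (?G 0)" for b c
    proof -
      have "Bcirc (?G 0) (Mmat n 1 one_poly y) b c = PiG (?G 0) Q b c" using Qe by simp
      thus ?thesis using that fst0 by (auto simp: Bcirc_def PiG_def Mmat_one V_def)
    qed
    define y' where "y' = (\<lambda>(b, c). if b \<in> V \<and> c \<in> V then Q b c else y (b, c))"
    have agree: "y' p = y p" if "p \<in> Aset f g m" for p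
    proof (cases p)
      case (Pair b c)
      show ?thesis
      proof (cases "b \<in> V \<and> c \<in> V")
        case False thus ?thesis unfolding y'_def Pair by auto
      next
        case True
        have "b = c \<or> {b, c} \<in> snd (?G 0)"
        proof (cases "b = c")
          case False
          have "{b, c} \<in> snd (tsp_graph n f g m 1)"
            using True False that Pair by (auto simp: tsp_graph_def V_def)
          have z0: "(zexp, zexp) \<in> supp (gg g 0)" by (simp add: gg_def supp_one)
          have t0: "TS ext n f g m 1 0 0 = tsp_graph n f g m 1" by simp
          have st: "(eadd b zexp, eadd c zexp) \<in> supp_g (gg g 0) (TS ext n f g m 1 0 0)"
            unfolding t0 by (rule supp_g_mem[OF \<open>{b, c} \<in> snd (tsp_graph n f g m 1)\<close> z0])
          have bV: "b \<in> Nmon n (1 - dj n g 0)" "c \<in> Nmon n (1 - dj n g 0)"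
            using True by (simp_all add: dj0 V_def)
          have "{b, c} \<in> snd (Fgraph n g m 1 (TS ext n f g m 1 0) 0)"
            by (rule Fgraph_mem[where Gp="TS ext n f g m 1 0" and m=m, OF bV False z0 st])
          thus ?thesis using sndG[of 0] by blast
        qed simp
        thus ?thesis using True Qy by (simp add: y'_def Pair)
      qed
    qed
    have Ly_eq: "Ly y' f = Ly y f"
      unfolding Ly_def by (rule sum.cong) (auto simp: agree Aset_def)
    have herm: "herm_moments y'"
      unfolding herm_moments_def
    proof (intro allI)
      fix b c
      have hy: "y (b, c) = cnj (y (c, b))" using \<open>Pts y\<close> unfolding Pts_def herm_moments_def by blast
      have hQ: "b \<in> V \<Longrightarrow> c \<in> V \<Longrightarrow> Q b c = cnj (Q c b)" using Qpsd unfolding psd_def by blast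
      show "y' (b, c) = cnj (y' (c, b))" unfolding y'_def using hy hQ by auto
    qed
    have one: "y' (zexp, zexp) = 1"
    proof -
      have "zexp \<in> V" by (simp add: V_def)
      thus ?thesis using Qy[of zexp zexp] \<open>Pts y\<close> by (simp add: y'_def Pts_def)
    qed
    have psd0: "psd (Nmon n 1) (Mmat n 1 one_poly y')"
      using Qpsd unfolding V_def
      by (subst psd_cong[where Q' = Q]) (auto simp: Mmat_one y'_def V_def)
    have psdj: "psd (Nmon n (1 - dj n g j)) (Mmat n (1 - dj n g j) (g j) y')" if j: "j \<in> {1..m}" for j
    proof -
      have dj: "1 - dj n g j = 0" using dj1[OF j] by simp
      have "Bcirc (?G j) (Mmat n 0 (g j) y) \<in> PiG_psd (?G j)"
      proof -
        have all: "\<forall>j\<in>{0..m}. Bcirc (?G j) (Mmat n (1 - dj n g j) (gg g j) y) \<in> PiG_psd (?G j)"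
          using \<open>Pts y\<close> unfolding Pts_def by (elim conjE)
        have "j \<in> {0..m}" using j by simp
        from bspec[OF all this] have "Bcirc (?G j) (Mmat n (1 - dj n g j) (gg g j) y) \<in> PiG_psd (?G j)" .
        moreover have "gg g j = g j" using j by (simp add: gg_def)
        ultimately show ?thesis unfolding dj by simp
      qed
      then obtain Qj where Qje: "Bcirc (?G j) (Mmat n 0 (g j) y) = PiG (?G j) Qj"
        and Qjpsd: "psd (Nmon n 0) Qj"
        unfolding PiG_psd_def using fstG[of j] dj by auto
      have fj: "fst (?G j) = Nmon n 0" using fstG[of j] dj by simp
      have e1: "Mmat n 0 (g j) y b c = Qj b c" if "b \<in> Nmon n 0" "c \<in> Nmon n 0" for b c
      proof -
        have "b = c" using that Nmon0 by blast
        have "Bcirc (?G j) (Mmat n 0 (g j) y) b c = PiG (?G j) Qj b c" using Qje by simp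
        thus ?thesis using that fj \<open>b = c\<close> by (simp add: Bcirc_def PiG_def)
      qed
      have e2: "Mmat n 0 (g j) y' b c = Mmat n 0 (g j) y b c" for b c
      proof (cases "b \<in> Nmon n 0 \<and> c \<in> Nmon n 0")
        case True
        hence "b = zexp" "c = zexp" using Nmon0 by auto
        moreover have "(\<Sum>(b', c')\<in>supp (g j). g j (b', c') * y' (b', c'))
            = (\<Sum>(b', c')\<in>supp (g j). g j (b', c') * y (b', c'))"
        proof (rule sum.cong[OF refl])
          fix p assume "p \<in> supp (g j)"
          hence "p \<in> Aset f g m" using j unfolding Aset_def by blast
          thus "(case p of (b', c') \<Rightarrow> g j (b', c') * y' (b', c')) = (case p of (b', c') \<Rightarrow> g j (b', c') * y (b', c'))"
            using agree by (cases p) simp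
        qed
        ultimately show ?thesis by (simp add: Mmat_def)
      qed (unfold Mmat_def, auto)
      show ?thesis unfolding dj using Qjpsd
        by (subst psd_cong[where Q' = Qj]) (auto simp: e1 e2)
    qed
    show ?thesis
      apply (rule exI[of _ y'])
      unfolding Pd_def using herm one psd0 psdj Ly_eq by (intro conjI ballI) auto
  qed
  have "{ereal (Re (Ly y f)) | y. Pts y} = {ereal (Re (Ly y f)) | y. Pd y}"
  proof (rule set_eqI, rule iffI)
    fix x assume "x \<in> {ereal (Re (Ly y f)) | y. Pts y}"
    then obtain y where "Pts y" "x = ereal (Re (Ly y f))" by auto
    from t2d[OF this(1)] obtain y' where "Pd y'" "Re (Ly y' f) = Re (Ly y f)" by blast
    thus "x \<in> {ereal (Re (Ly y f)) | y. Pd y}" using \<open>x = ereal (Re (Ly y f))\<close> by (metis (mono_tags, lifting) mem_Collect_eq)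
  next
    fix x assume "x \<in> {ereal (Re (Ly y f)) | y. Pd y}"
    then show "x \<in> {ereal (Re (Ly y f)) | y. Pts y}" using d2t by blast
  qed
  thus ?thesis unfolding rho_ts_def rho_dense_def Pts_def Pd_def by simp
qed

end
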